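(* Let $\sigma>0$ and $V,\gamma,\varepsilon>0$ satisfy $\sqrt{\frac{1+\sigma}{\sigma}}<\frac{V+\gamma\varepsilon}{\sqrt\sigma}<\zeta_\sigma$. Let $n_s:=\frac{V+\gamma\varepsilon}{\sqrt\sigma}$ and \[ g(n):=\frac{(V+\gamma\varepsilon)^2}{n}+\sigma n+e^{H(n)},\qquad H(n):=\frac{(V+\gamma\varepsilon)^2}{2}\Big(1-\frac1{n^2}\Big)-\sigma\ln n\quad(n>0). \] Then $g(1)>g(n_s)$.
   Context: $\zeta_\sigma$ denotes the unique root $z>1$ of $z^{\sigma}[\sigma(z-1)^2+1]=\exp(\tfrac{\sigma}{2}(z^2-1))$ on $(1,\infty)$. *)

theory Defs
  imports Complex_Main
begin

definition zeta :: "real \<Rightarrow> real" where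
  "zeta \<sigma> = (THE z. z > 1 \<and>
      z powr \<sigma> * (\<sigma> * (z - 1)^2 + 1) = exp (\<sigma> / 2 * (z^2 - 1)))"

text \<open>H(n) with parameter A = V + gamma*eps.\<close>
definition H :: "real \<Rightarrow> real \<Rightarrow> real \<Rightarrow> real" where
  "H \<sigma> A n = A^2 / 2 * (1 - 1 / n^2) - \<sigma> * ln n"

definition g :: "real \<Rightarrow> real \<Rightarrow> real \<Rightarrow> real" where
  "g \<sigma> A n = A^2 / n + \<sigma> * n + exp (H \<sigma> A n)"

end

theory Submission
  imports Defs
begin

definition FF :: "real \<Rightarrow> real \<Rightarrow> real" where
  "FF s z = s * ln z + ln (s*(z-1)^2+1) - s/2*(z^2-1)"

lemma Dpos: fixes s z :: real assumes "s > 0" shows "s*(z-1)^2+1 > 0"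
proof -
  have "s*(z-1)^2 \<ge> 0" using assms by simp
  then show ?thesis by linarith
qed

lemma Fderiv:
  fixes s z :: real assumes "s > 0" "z > 0"
  shows "(FF s has_real_derivative
     s*(z-1)^2*(1 - s*(z^2-1))/(z*(s*(z-1)^2+1))) (at z)"
proof -
  have D: "s*(z-1)^2+1 > 0" using Dpos assms by blast
  have "((\<lambda>z. s * ln z + ln (s*(z-1)^2+1) - s/2*(z^2-1)) has_real_derivative
     s * (1/z) + (s*(2*(z-1)))/(s*(z-1)^2+1) - s/2*(2*z)) (at z)"
    using assms D by (auto intro!: derivative_eq_intros simp: power2_eq_square)
  moreover have "s * (1/z) + (s*(2*(z-1)))/(s*(z-1)^2+1) - s/2*(2*z)
      = s*(z-1)^2*(1 - s*(z^2-1))/(z*(s*(z-1)^2+1))"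
  proof -
    define d where "d = s*(z-1)^2+1"
    have d: "d > 0" using D d_def by simp
    have e1: "(s * (1/z) + (s*(2*(z-1)))/d - s/2*(2*z)) * (z*d) = s*d + 2*s*z*(z-1) - s*z^2*d"
      using assms(2) d by (simp add: field_simps power2_eq_square)
    have e2: "s*d + 2*s*z*(z-1) - s*z^2*d = s*(z-1)^2*(1 - s*(z^2-1))"
      unfolding d_def by (simp add: algebra_simps power2_eq_square)
    have "z*d \<noteq> 0" using assms d by simp
    then have "s * (1/z) + (s*(2*(z-1)))/d - s/2*(2*z) = s*(z-1)^2*(1 - s*(z^2-1))/(z*d)"
      using e1 e2 by (simp add: eq_divide_eq)
    then show ?thesis unfolding d_def .
  qed
  ultimately show ?thesis unfolding FF_def[abs_def] by simp
qed

lemma Fcont: fixes s a b :: real assumes "s > 0" "a > 0"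
  shows "continuous_on {a..b} (FF s)"
proof (rule DERIV_continuous_on)
  fix x assume "x \<in> {a..b}"
  then have "x > 0" using assms by auto
  then show "(FF s has_real_derivative
     s*(x-1)^2*(1 - s*(x^2-1))/(x*(s*(x-1)^2+1))) (at x within {a..b})"
    using Fderiv[OF assms(1)] has_field_derivative_at_within by blast
qed

lemma F_inc: fixes s a b :: real
  assumes s: "s > 0" and "1 \<le> a" "a < b" "b^2 \<le> 1 + 1/s"
  shows "FF s a < FF s b"
proof (rule DERIV_pos_imp_increasing_open[OF assms(3)])
  fix x assume x: "a < x" "x < b"
  have x1: "x > 1" using x assms by linarith
  have "x^2 < b^2" using x x1 by (intro power_strict_mono) auto
  then have "x^2 - 1 < 1/s" using assms by linarith
  then have "s*(x^2-1) < 1" using s by (simp add: field_simps)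
  moreover have "(x-1)^2 > 0" using x1 by simp
  ultimately have "s*(x-1)^2*(1 - s*(x^2-1))/(x*(s*(x-1)^2+1)) > 0"
    using s x1 Dpos[OF s, of x] by (intro divide_pos_pos mult_pos_pos) auto
  then show "\<exists>y. (FF s has_real_derivative y) (at x) \<and> 0 < y"
    using Fderiv[OF s, of x] x1 by auto
next
  show "continuous_on {a..b} (FF s)" using Fcont assms by simp
qed

lemma F_dec: fixes s a b :: real
  assumes s: "s > 0" and "0 < a" "a < b" "a^2 \<ge> 1 + 1/s"
  shows "FF s b < FF s a"
proof (rule DERIV_neg_imp_decreasing_open[OF assms(3)])
  fix x assume x: "a < x" "x < b"
  have x0: "x > 0" using x assms by linarith
  have "a^2 < x^2" using x assms by (intro power_strict_mono) auto
  then have "x^2 - 1 > 1/s" using assms by linarith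
  then have "s*(x^2-1) > 1" using s by (simp add: field_simps)
  moreover have x1: "x > 1"
  proof (rule ccontr)
    assume "\<not> x > 1" then have "x^2 \<le> 1^2" using x0 by (intro power_mono) auto
    moreover have "1/s > 0" using s by simp
    ultimately show False using \<open>x^2 - 1 > 1/s\<close> by simp
  qed
  moreover have "(x-1)^2 > 0" using x1 by simp
  ultimately have "s*(x-1)^2*(1 - s*(x^2-1)) < 0"
    using s by (simp add: mult_pos_neg)
  then have "s*(x-1)^2*(1 - s*(x^2-1))/(x*(s*(x-1)^2+1)) < 0"
    using s x0 Dpos[OF s, of x] by (intro divide_neg_pos) auto
  then show "\<exists>y. (FF s has_real_derivative y) (at x) \<and> y < 0"
    using Fderiv[OF s, of x] x0 by auto
next
  show "continuous_on {a..b} (FF s)" using Fcont assms by simp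
qed

lemma F_eq: fixes s z :: real assumes "s > 0" "z > 0"
  shows "(z powr s * (s * (z - 1)^2 + 1) = exp (s / 2 * (z^2 - 1))) \<longleftrightarrow> FF s z = 0"
proof -
  have D: "s*(z-1)^2+1 > 0" using Dpos assms by blast
  have "(z powr s * (s * (z - 1)^2 + 1) = exp (s / 2 * (z^2 - 1))) \<longleftrightarrow>
        ln (z powr s * (s * (z - 1)^2 + 1)) = s / 2 * (z^2 - 1)"
  proof -
    have P: "z powr s * (s * (z - 1)^2 + 1) > 0" using D assms by simp
    show ?thesis
    proof
      assume "z powr s * (s * (z - 1)^2 + 1) = exp (s / 2 * (z^2 - 1))"
      then show "ln (z powr s * (s * (z - 1)^2 + 1)) = s / 2 * (z^2 - 1)" by simp
    next
      assume h: "ln (z powr s * (s * (z - 1)^2 + 1)) = s / 2 * (z^2 - 1)"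
      have "exp (ln (z powr s * (s * (z - 1)^2 + 1))) = exp (s / 2 * (z^2 - 1))"
        by (simp only: h)
      then show "z powr s * (s * (z - 1)^2 + 1) = exp (s / 2 * (z^2 - 1))"
        by (simp only: exp_ln[OF P])
    qed
  qed
  also have "ln (z powr s * (s * (z - 1)^2 + 1)) = s * ln z + ln (s*(z-1)^2+1)"
    using D assms by (simp add: ln_mult ln_powr)
  finally show ?thesis unfolding FF_def by linarith
qed

lemma F_large: fixes s :: real assumes s: "s > 0"
  shows "FF s (2 + 4 / sqrt s) < 0"
proof -
  define b where "b = 2 + 4 / sqrt s"
  define r where "r = sqrt s"
  have r: "r > 0" "r^2 = s" using s unfolding r_def by auto
  have "4 / sqrt s > 0" using s by simp
  then have b1: "b > 1" unfolding b_def by linarith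
  have "ln b \<le> b - 1" using b1 by (intro ln_le_minus_one) auto
  have y: "s*(b-1)^2+1 > 0" using Dpos s by blast
  have "ln (s*(b-1)^2+1) = 2 * ln (sqrt (s*(b-1)^2+1))"
    using y by (simp add: ln_sqrt)
  also have "... \<le> 2 * (sqrt (s*(b-1)^2+1) - 1)"
    using y ln_le_minus_one[of "sqrt (s*(b-1)^2+1)"] by simp
  also have "sqrt (s*(b-1)^2+1) \<le> r*(b-1) + 1"
  proof (rule real_sqrt_le_iff[THEN iffD2, THEN order_trans])
    show "sqrt ((r*(b-1) + 1)^2) \<le> r*(b-1)+1" using r b1 by simp
    show "s * (b - 1)\<^sup>2 + 1 \<le> (r * (b - 1) + 1)\<^sup>2"
      using r b1 by (simp add: power2_eq_square algebra_simps)
  qed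
  finally have L: "ln (s*(b-1)^2+1) \<le> 2*r*(b-1)" by simp
  have "FF s b \<le> s*(b-1) + 2*r*(b-1) - s/2*(b^2-1)"
  proof -
    have "s * ln b \<le> s * (b-1)" using \<open>ln b \<le> b - 1\<close> s by (intro mult_left_mono) auto
    then show ?thesis unfolding FF_def using L by linarith
  qed
  also have "... = (b-1) * (s + 2*r - s*(b+1)/2)" by (simp add: algebra_simps power2_eq_square)
  also have "s + 2*r - s*(b+1)/2 = - s/2"
    unfolding b_def r_def[symmetric] using r
    by (simp add: field_simps power2_eq_square)
  finally have "FF s b \<le> (b-1) * (-s/2)" .
  also have "... < 0" using b1 s by (simp add: mult_pos_neg)
  finally show ?thesis unfolding b_def .
qed

lemma zeta_char: fixes s :: real assumes s: "s > 0"
  shows "zeta s > sqrt (1 + 1/s) \<and> FF s (zeta s) = 0"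
proof -
  define m where "m = sqrt (1 + 1/s)"
  have m2: "m^2 = 1 + 1/s" unfolding m_def using s by (simp add: add_pos_pos)
  have m1: "m > 1" unfolding m_def using s by simp
  have F1: "FF s 1 = 0" unfolding FF_def by simp
  have Fm: "FF s m > 0" using F_inc[OF s, of 1 m] m1 m2 F1 by simp
  define b where "b = 2 + 4 / sqrt s"
  have "m \<le> 1 + 1 / sqrt s"
  proof -
    have "1 + 1/s \<le> (1 + 1/sqrt s)^2"
      using s by (simp add: power2_eq_square field_simps)
    then have "sqrt (1+1/s) \<le> sqrt ((1 + 1/sqrt s)^2)" by (rule real_sqrt_le_mono)
    then show ?thesis unfolding m_def using s by simp
  qed
  moreover have "1 / sqrt s < 4 / sqrt s" using s by (intro divide_strict_right_mono) auto
  ultimately have mb: "m < b" unfolding b_def by linarith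
  have Fb: "FF s b < 0" unfolding b_def using F_large[OF s] .
  obtain z where z: "z \<ge> m" "z \<le> b" "FF s z = 0"
    using IVT2'[of "FF s" b 0 m] Fb Fm mb Fcont[OF s, of m b] m1 by auto
  have zm: "z > m" using z Fm by (cases "z = m") auto
  have uniq: "y = z" if y: "y > 1" "FF s y = 0" for y
  proof -
    have ym: "y > m"
    proof (rule ccontr)
      assume "\<not> y > m"
      then have "y^2 \<le> m^2" using y by (intro power_mono) auto
      then have "FF s 1 < FF s y" using F_inc[OF s, of 1 y] y m2 by simp
      then show False using F1 y by simp
    qed
    show ?thesis
    proof (rule ccontr)
      assume "y \<noteq> z"
      then consider "y < z" | "z < y" by linarith
      then show False
      proof cases
        case 1
        have "m^2 \<le> y^2" using ym m1 by (intro power_mono) auto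
        then show ?thesis using F_dec[OF s, of y z] 1 ym m1 m2 y z by simp
      next
        case 2
        have "m^2 \<le> z^2" using zm m1 by (intro power_mono) auto
        then show ?thesis using F_dec[OF s, of z y] 2 zm m1 m2 y z by simp
      qed
    qed
  qed
  have "zeta s = z"
    unfolding zeta_def
  proof (rule the_equality)
    show "1 < z \<and> z powr s * (s * (z - 1)\<^sup>2 + 1) = exp (s / 2 * (z\<^sup>2 - 1))"
      using F_eq[OF s, of z] z zm m1 by auto
    fix y assume "1 < y \<and> y powr s * (s * (y - 1)\<^sup>2 + 1) = exp (s / 2 * (y\<^sup>2 - 1))"
    then show "y = z" using uniq F_eq[OF s, of y] by auto
  qed
  then show ?thesis using zm z m_def by simp
qed

theorem lemma2p1:
  fixes \<sigma> V \<gamma> \<epsilon> :: real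
  assumes "\<sigma> > 0" "V > 0" "\<gamma> > 0" "\<epsilon> > 0"
    and "sqrt ((1 + \<sigma>) / \<sigma>) < (V + \<gamma> * \<epsilon>) / sqrt \<sigma>"
    and "(V + \<gamma> * \<epsilon>) / sqrt \<sigma> < zeta \<sigma>"
  shows "g \<sigma> (V + \<gamma> * \<epsilon>) 1 > g \<sigma> (V + \<gamma> * \<epsilon>) ((V + \<gamma> * \<epsilon>) / sqrt \<sigma>)"
proof -
  define s where "s = \<sigma>"
  define A where "A = V + \<gamma> * \<epsilon>"
  define n where "n = A / sqrt s"
  have s: "s > 0" using assms s_def by simp
  have A: "A > 0" unfolding A_def using assms by (simp add: add_pos_pos)
  have n0: "n > 0" unfolding n_def using A s by simp
  have An: "A^2 = s * n^2" unfolding n_def using s by (simp add: power_divide)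
  have "(1 + s)/s = 1 + 1/s" using s by (simp add: field_simps)
  then have nm: "n > sqrt (1 + 1/s)" using assms(5) unfolding n_def A_def s_def by simp
  have "sqrt (1 + 1/s) > 1" using s by simp
  then have n1: "n > 1" using nm by linarith
  have nz: "n < zeta s" using assms(6) unfolding n_def A_def s_def .
  have zc: "zeta s > sqrt (1 + 1/s)" "FF s (zeta s) = 0" using zeta_char[OF s] by auto
  have "(sqrt (1+1/s))^2 = 1 + 1/s" using s by (simp add: add_pos_pos)
  moreover have "1/s > 0" using s by simp
  then have "(sqrt (1+1/s))^2 \<le> n^2" using nm by (intro power_mono) auto
  ultimately have Fn: "FF s n > 0" using F_dec[OF s, of n "zeta s"] nz zc n0 by simp
  have D: "s*(n-1)^2+1 > 0" using Dpos s by blast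
  have "s/2*(n^2-1) - s * ln n < ln (s*(n-1)^2+1)" using Fn unfolding FF_def by simp
  then have E: "exp (s/2*(n^2-1) - s * ln n) < s*(n-1)^2+1"
    using D by (metis exp_less_mono exp_ln)
  have H1: "H s A 1 = 0" unfolding H_def by simp
  have Hn: "H s A n = s/2*(n^2-1) - s * ln n"
    unfolding H_def An using n0 by (simp add: field_simps power2_eq_square)
  have "g s A n = s * n + s * n + exp (s/2*(n^2-1) - s * ln n)"
    unfolding g_def Hn An using n0 by (simp add: power2_eq_square)
  also have "... < 2 * s * n + s*(n-1)^2+1" using E by simp
  also have "... = s * n^2 + s + 1" by (simp add: power2_eq_square algebra_simps)
  also have "... = g s A 1" unfolding g_def H1 An by simp
  finally show ?thesis unfolding s_def A_def n_def .
qed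

end
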